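(* Let $H$ be an abelian group with an alternating $\mathbb{Z}$-bilinear form $\langle-,-\rangle\neq0$, and let $z\in\ker\mu$. Then the composition \[ Z_2(\mathbb{Q}[H^{(1)}])_{(z)}\longrightarrow C_2(\mathbb{Q}[H])_{(z)}\longrightarrow \hat C_2(\mathbb{Q}[H])_{(z)}\longrightarrow \mathbb{Q}\otimes_{\mathbb{Z}}(H/\mathbb{Z}z) \] is surjective, where the first map is induced by inclusion, the second is the quotient projection, and the third is the isomorphism induced by $[u]\wedge[v]\mapsto 1\otimes\bar u$ (for $u+v=z$).
   Context: $\mu:H\to\mathrm{Hom}_{\mathbb{Z}}(H,\mathbb{Z})$, $\mu(x)(y)=\langle x,y\rangle$; $H^{(1)}:=H\setminus\ker\mu$. $\mathbb{Q}[S]$ ($S\subset H$) is the $\mathbb{Q}$-vector space with basis symbols $[x]$, $x\in S$; $\mathbb{Q}[H]$ is a Lie algebra via $[[x],[y]]=\langle x,y\rangle[x+y]$ and $\mathbb{Q}[H^{(1)}]$ is a Lie subalgebra. Chevalley–Eilenberg chains $C_p(\mathfrak g)=\bigwedge^p_{\mathbb{Q}}\mathfrak g$ with the standard boundary. For $S\in\{H,H^{(1)}\}$, $C_2(\mathbb{Q}[S])_{(w)}$ is the span of $[u_1]\wedge[u_2]$ with $u_i\in S$, $u_1+u_2=w$, and $Z_2(\mathbb{Q}[S])_{(w)}$ its cycles. $\hat I$ is the ideal of $\bigwedge\mathbb{Q}[H]$ generated by all $[u+v]\wedge[x]-[u]\wedge[x+v]-[v]\wedge[x+u]$, $u,v,x\in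 H$; $\hat C_2(\mathbb{Q}[H])_{(z)}=C_2(\mathbb{Q}[H])_{(z)}/(\hat I\cap C_2(\mathbb{Q}[H])_{(z)})$, which is isomorphic to $\mathbb{Q}\otimes(H/\mathbb{Z}z)$ via $[u]\wedge[z-u]\mapsto 1\otimes\bar u$. *)

theory Defs
  imports Complex_Main
begin

definition alt_bilinear :: "('a::ab_group_add \<Rightarrow> 'a \<Rightarrow> int) \<Rightarrow> bool" where
  "alt_bilinear B \<longleftrightarrow>
     (\<forall>x y w. B (x + y) w = B x w + B y w) \<and>
     (\<forall>x y w. B x (y + w) = B x y + B x w) \<and>
     (\<forall>x. B x x = 0)"

text \<open>ker mu, where mu(x)(y) = B x y, and H^(1) = H minus ker mu.\<close>
definition ker_mu :: "('a \<Rightarrow> 'a \<Rightarrow> int) \<Rightarrow> 'a set" where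
  "ker_mu B = {x. \<forall>y. B x y = 0}"

definition H1 :: "('a \<Rightarrow> 'a \<Rightarrow> int) \<Rightarrow> 'a set" where
  "H1 B = UNIV - ker_mu B"

text \<open>Elements of Q[H] are finitely supported functions H -> Q (coefficient of [x] at x).
  Elements of C_2(Q[H]) = Wedge^2 Q[H] are finitely supported antisymmetric functions
  f : H x H -> Q; the element [x] wedge [y] is the function with value 1 at (x,y) and -1 at (y,x),
  and a general f equals (1/2) * sum over ordered pairs (x,y) of f(x,y) [x] wedge [y].\<close>

definition fin_supp :: "('b \<Rightarrow> rat) \<Rightarrow> bool" where
  "fin_supp f \<longleftrightarrow> finite {p. f p \<noteq> 0}"

definition wedge :: "'a \<Rightarrow> 'a \<Rightarrow> ('a \<times> 'a \<Rightarrow> rat)" where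
  "wedge x y = (\<lambda>p. (if p = (x, y) then 1 else 0) - (if p = (y, x) then 1 else 0))"

text \<open>C_2(Q[S])_(w): span of [u1] wedge [u2] with u1, u2 in S, u1 + u2 = w.\<close>
definition C2w :: "'a::ab_group_add set \<Rightarrow> 'a \<Rightarrow> ('a \<times> 'a \<Rightarrow> rat) set" where
  "C2w S w = {f. fin_supp f \<and> (\<forall>x y. f (x, y) = - f (y, x)) \<and>
                (\<forall>p. f p \<noteq> 0 \<longrightarrow> fst p \<in> S \<and> snd p \<in> S \<and> fst p + snd p = w)}"

text \<open>Chevalley--Eilenberg boundary C_2 -> C_1 for the Lie algebra Q[H] with
  [[x],[y]] = B x y [x+y]:  d([x] wedge [y]) = - [[x],[y]], extended linearly.\<close>
definition ce_d2 :: "('a::ab_group_add \<Rightarrow> 'a \<Rightarrow> int) \<Rightarrow> ('a \<times> 'a \<Rightarrow> rat) \<Rightarrow> ('a \<Rightarrow> rat)" where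
  "ce_d2 B f = (\<lambda>w. - (1/2) * (\<Sum>p\<in>{p. f p \<noteq> 0 \<and> fst p + snd p = w}.
                                   f p * of_int (B (fst p) (snd p))))"

text \<open>Z_2(Q[S])_(w): the cycles in C_2(Q[S])_(w).  (For S = H^(1), the boundary of the
  subalgebra Q[H^(1)] is the restriction of that of Q[H].)\<close>
definition Z2w :: "('a::ab_group_add \<Rightarrow> 'a \<Rightarrow> int) \<Rightarrow> 'a set \<Rightarrow> 'a \<Rightarrow> ('a \<times> 'a \<Rightarrow> rat) set" where
  "Z2w B S w = {f \<in> C2w S w. ce_d2 B f = (\<lambda>_. 0)}"

definition int_mult :: "int \<Rightarrow> 'a::ab_group_add \<Rightarrow> 'a" where
  "int_mult k z = (if 0 \<le> k then (\<Sum>i<nat k. z) else - (\<Sum>i<nat (- k). z))"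

definition qspan :: "('b \<Rightarrow> rat) set \<Rightarrow> ('b \<Rightarrow> rat) set" where
  "qspan G = {v. \<exists>F c. finite F \<and> F \<subseteq> G \<and> v = (\<lambda>x. \<Sum>g\<in>F. c g * g x)}"

definition delta :: "'a \<Rightarrow> 'a \<Rightarrow> rat" where
  "delta a = (\<lambda>x. if x = a then 1 else 0)"

text \<open>Q tensor_Z A = Q^(A) / span{[a+b]-[a]-[b]}, with A = H/Zz, where Q^(H/Zz) is
  presented as Q^(H) / span{[a]-[b] : a - b in Zz}.  So Q tensor_Z (H/Zz) is the quotient
  of the finitely supported functions H -> Q by qspan (tensor_rel z); the class of
  delta u is 1 tensor (u mod Zz).\<close>
definition tensor_rel :: "'a::ab_group_add \<Rightarrow> ('a \<Rightarrow> rat) set" where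
  "tensor_rel z =
     {delta (a + b) - delta a - delta b | a b. True} \<union>
     {delta a - delta b | a b. \<exists>k. a - b = int_mult k z}"

text \<open>The composite C_2(Q[H])_(z) -> hat C_2(Q[H])_(z) -> Q tensor (H/Zz), i.e. the linear
  extension of [u] wedge [z-u] |-> 1 tensor (u mod Zz), lifted to Q^(H):
  f = (1/2) sum f(x,y) [x] wedge [y]  |->  (1/2) sum f(x,y) delta x.\<close>
definition tensor_map :: "('a \<times> 'a \<Rightarrow> rat) \<Rightarrow> ('a \<Rightarrow> rat)" where
  "tensor_map f = (\<lambda>u. (1/2) * (\<Sum>p\<in>{p. f p \<noteq> 0 \<and> fst p = u}. f p))"

end

theory Submission
  imports Defs
begin

lemma qspan_add:
  assumes "u \<in> qspan G" "v \<in> qspan G" shows "(\<lambda>x. u x + v x) \<in> qspan G"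
proof -
  obtain F1 c1 where F1: "finite F1" "F1 \<subseteq> G" "u = (\<lambda>x. \<Sum>g\<in>F1. c1 g * g x)"
    using assms(1) unfolding qspan_def by blast
  obtain F2 c2 where F2: "finite F2" "F2 \<subseteq> G" "v = (\<lambda>x. \<Sum>g\<in>F2. c2 g * g x)"
    using assms(2) unfolding qspan_def by blast
  define c where "c g = (if g \<in> F1 then c1 g else 0) + (if g \<in> F2 then c2 g else 0)" for g
  have "(\<lambda>x. u x + v x) = (\<lambda>x. \<Sum>g\<in>F1\<union>F2. c g * g x)"
  proof
    fix x
    have "(\<Sum>g\<in>F1\<union>F2. c g * g x) = (\<Sum>g\<in>F1\<union>F2. (if g \<in> F1 then c1 g * g x else 0) + (if g \<in> F2 then c2 g * g x else 0))"
      by (rule sum.cong) (auto simp: c_def distrib_right)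
    also have "\<dots> = (\<Sum>g\<in>F1\<union>F2. (if g \<in> F1 then c1 g * g x else 0)) + (\<Sum>g\<in>F1\<union>F2. (if g \<in> F2 then c2 g * g x else 0))"
      by (rule sum.distrib)
    also have "\<dots> = (\<Sum>g\<in>(F1\<union>F2) \<inter> F1. c1 g * g x) + (\<Sum>g\<in>(F1\<union>F2) \<inter> F2. c2 g * g x)"
      using F1(1) F2(1) by (simp only: sum.inter_restrict finite_Un)
    also have "\<dots> = u x + v x"
    proof -
      have "(F1\<union>F2) \<inter> F1 = F1" "(F1\<union>F2) \<inter> F2 = F2" by auto
      then show ?thesis using F1 F2 by simp
    qed
    finally show "u x + v x = (\<Sum>g\<in>F1\<union>F2. c g * g x)" by simp
  qed
  note eq = this
  have fin: "finite (F1 \<union> F2)" using F1(1) F2(1) by simp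
  have sub: "F1 \<union> F2 \<subseteq> G" using F1(2) F2(2) by simp
  show ?thesis unfolding qspan_def
    by (rule CollectI, rule exI[of _ "F1 \<union> F2"], rule exI[of _ c], intro conjI fin sub eq)
qed

lemma qspan_scale:
  assumes "u \<in> qspan G" shows "(\<lambda>x. r * u x) \<in> qspan G"
proof -
  obtain F c where F: "finite F" "F \<subseteq> G" "u = (\<lambda>x. \<Sum>g\<in>F. c g * g x)"
    using assms unfolding qspan_def by blast
  have "(\<lambda>x. r * u x) = (\<lambda>x. \<Sum>g\<in>F. (r * c g) * g x)"
    using F(3) by (simp add: sum_distrib_left mult.assoc)
  note eq = this
  show ?thesis unfolding qspan_def
    by (rule CollectI, rule exI[of _ F], rule exI[of _ "\<lambda>g. r * c g"], intro conjI F(1) F(2) eq)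
qed

lemma qspan_base: "g \<in> G \<Longrightarrow> g \<in> qspan G"
  unfolding qspan_def
  by (rule CollectI, rule exI[of _ "{g}"], rule exI[of _ "\<lambda>_. 1"]) auto

lemma qspan_zero: "(\<lambda>x. 0) \<in> qspan G"
  unfolding qspan_def by auto

lemma qspan_eq: "u \<in> qspan G \<Longrightarrow> u = v \<Longrightarrow> v \<in> qspan G" by simp

definition goodh :: "('a::ab_group_add \<Rightarrow> 'a \<Rightarrow> int) \<Rightarrow> 'a \<Rightarrow> ('a \<Rightarrow> rat) \<Rightarrow> bool" where
  "goodh B z h \<longleftrightarrow> fin_supp h \<and> (\<forall>y. h y \<noteq> 0 \<longrightarrow> y \<in> H1 B) \<and> (\<forall>y. h (z - y) = - h y)"

lemma goodh_add: "goodh B z h1 \<Longrightarrow> goodh B z h2 \<Longrightarrow> goodh B z (\<lambda>x. h1 x + r * h2 x)"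
  unfolding goodh_def fin_supp_def
proof (intro conjI allI impI)
  assume a: "finite {p. h1 p \<noteq> 0} \<and> (\<forall>y. h1 y \<noteq> 0 \<longrightarrow> y \<in> H1 B) \<and> (\<forall>y. h1 (z - y) = - h1 y)"
     and b: "finite {p. h2 p \<noteq> 0} \<and> (\<forall>y. h2 y \<noteq> 0 \<longrightarrow> y \<in> H1 B) \<and> (\<forall>y. h2 (z - y) = - h2 y)"
  have "{p. h1 p + r * h2 p \<noteq> 0} \<subseteq> {p. h1 p \<noteq> 0} \<union> {p. h2 p \<noteq> 0}" by auto
  then show "finite {p. h1 p + r * h2 p \<noteq> 0}" using a b by (meson finite_Un finite_subset)
  fix y
  show "h1 y + r * h2 y \<noteq> 0 \<Longrightarrow> y \<in> H1 B"
  proof -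
    assume "h1 y + r * h2 y \<noteq> 0"
    then have "h1 y \<noteq> 0 \<or> h2 y \<noteq> 0" by auto
    then show "y \<in> H1 B" using a b by blast
  qed
  show "h1 (z - y) + r * h2 (z - y) = - (h1 y + r * h2 y)" using a b by simp
qed

lemma goodh_zero: "goodh B z (\<lambda>x. 0)"
  unfolding goodh_def fin_supp_def by simp

lemma ker_B_left:
  assumes "alt_bilinear B" "z \<in> ker_mu B" shows "B a z = 0"
proof -
  have L: "\<forall>x y w. B (x + y) w = B x w + B y w" and R: "\<forall>x y w. B x (y + w) = B x y + B x w"
    and A: "\<forall>x. B x x = 0" using assms(1) unfolding alt_bilinear_def by auto
  have "0 = B (a + z) (a + z)" using A by simp
  also have "\<dots> = B a (a + z) + B z (a + z)" using L by blast
  also have "\<dots> = (B a a + B a z) + (B z a + B z z)" using R by simp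
  finally have e: "0 = (B a a + B a z) + (B z a + B z z)" .
  moreover have "B z a = 0" "B z z = 0" using assms(2) unfolding ker_mu_def by auto
  moreover have "B a a = 0" using A by simp
  ultimately show ?thesis by simp
qed

lemma B_pair_zero:
  assumes "alt_bilinear B" "z \<in> ker_mu B" shows "B a (z - a) = 0"
proof -
  have "B a z = B a ((z - a) + a)" by simp
  also have "\<dots> = B a (z - a) + B a a" using assms(1) unfolding alt_bilinear_def by blast
  finally show ?thesis using ker_B_left[OF assms, of a] assms(1) unfolding alt_bilinear_def by simp
qed

lemma H1_refl:
  assumes "alt_bilinear B" "z \<in> ker_mu B" "y \<in> H1 B" shows "z - y \<in> H1 B"
proof (rule ccontr)
  assume "z - y \<notin> H1 B"
  then have k: "\<forall>w. B (z - y) w = 0" unfolding H1_def ker_mu_def by simp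
  have "\<forall>w. B y w = 0"
  proof
    fix w
    have "B z w = B ((z - y) + y) w" by simp
    also have "\<dots> = B (z - y) w + B y w" using assms(1) unfolding alt_bilinear_def by blast
    finally show "B y w = 0" using k assms(2) unfolding ker_mu_def by simp
  qed
  then show False using assms(3) unfolding H1_def ker_mu_def by simp
qed

lemma H1_shift:
  assumes "alt_bilinear B" "x \<in> ker_mu B" "v \<in> H1 B" shows "x + v \<in> H1 B"
proof (rule ccontr)
  assume "x + v \<notin> H1 B"
  then have k: "\<forall>w. B (x + v) w = 0" unfolding H1_def ker_mu_def by simp
  have "\<forall>w. B v w = 0"
  proof
    fix w
    have "B (x + v) w = B x w + B v w" using assms(1) unfolding alt_bilinear_def by blast
    then show "B v w = 0" using k assms(2) unfolding ker_mu_def by simp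
  qed
  then show False using assms(3) unfolding H1_def ker_mu_def by simp
qed

lemma rel1: "(\<lambda>w. delta (a + b) w - delta a w - delta b w) \<in> qspan (tensor_rel z)"
proof -
  have "delta (a + b) - delta a - delta b \<in> tensor_rel z" unfolding tensor_rel_def
    by (rule UnI1, rule CollectI, rule exI[of _ a], rule exI[of _ b]) simp
  moreover have "(\<lambda>w. delta (a + b) w - delta a w - delta b w) = delta (a + b) - delta a - delta b"
    by (simp add: fun_diff_def)
  ultimately show ?thesis using qspan_base by metis
qed

lemma rel2: "(\<lambda>w. delta z w - delta 0 w) \<in> qspan (tensor_rel z)"
proof -
  have "z - 0 = int_mult 1 z" unfolding int_mult_def by simp
  then have "delta z - delta 0 \<in> tensor_rel z" unfolding tensor_rel_def
    by (intro UnI2 CollectI exI[of _ z] exI[of _ 0] conjI refl exI[of _ 1])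
  moreover have "(\<lambda>w. delta z w - delta 0 w) = delta z - delta 0"
    by (simp add: fun_diff_def)
  ultimately show ?thesis using qspan_base by metis
qed

lemma relz: "delta z \<in> qspan (tensor_rel z)"
proof -
  have "(\<lambda>w. delta z w - delta 0 w + (-1) * (delta (0 + 0) w - delta 0 w - delta 0 w))
        \<in> qspan (tensor_rel z)"
    by (rule qspan_add[OF rel2 qspan_scale[OF rel1]])
  then show ?thesis by (rule qspan_eq) (auto simp: delta_def)
qed

lemma rel_pair: "(\<lambda>w. delta y w + delta (z - y) w) \<in> qspan (tensor_rel z)"
proof -
  have "(\<lambda>w. delta z w + (-1) * (delta (y + (z - y)) w - delta y w - delta (z - y) w))
        \<in> qspan (tensor_rel z)"
    by (rule qspan_add[OF relz qspan_scale[OF rel1]])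
  then show ?thesis by (rule qspan_eq) auto
qed

lemma hy_good:
  assumes "alt_bilinear B" "z \<in> ker_mu B" "y \<in> H1 B"
  shows "goodh B z (\<lambda>w. (1/2) * (delta y w - delta (z - y) w))
      \<and> (\<lambda>w. (1/2) * (delta y w - delta (z - y) w) - delta y w) \<in> qspan (tensor_rel z)"
proof
  have "{p. (1/2) * (delta y p - delta (z - y) p) \<noteq> (0::rat)} \<subseteq> {y, z - y}"
    by (auto simp: delta_def)
  then have f: "fin_supp (\<lambda>w. (1/2) * (delta y w - delta (z - y) w))"
    unfolding fin_supp_def by (meson finite.emptyI finite.insertI finite_subset)
  show "goodh B z (\<lambda>w. (1/2) * (delta y w - delta (z - y) w))"
    unfolding goodh_def using f H1_refl[OF assms] assms(3)
    by (auto simp: delta_def split: if_splits)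
  have "(\<lambda>w. (-1/2) * (delta y w + delta (z - y) w)) \<in> qspan (tensor_rel z)"
    by (rule qspan_scale[OF rel_pair])
  then show "(\<lambda>w. (1/2) * (delta y w - delta (z - y) w) - delta y w) \<in> qspan (tensor_rel z)"
    by (rule qspan_eq) (auto simp: algebra_simps)
qed

lemma delta_good:
  assumes "alt_bilinear B" "z \<in> ker_mu B" "v \<in> H1 B"
  shows "\<exists>h. goodh B z h \<and> (\<lambda>w. h w - delta x w) \<in> qspan (tensor_rel z)"
proof (cases "x \<in> H1 B")
  case True
  note hg = hy_good[OF assms(1,2) True]
  show ?thesis
    by (rule exI[of _ "\<lambda>w. (1/2) * (delta x w - delta (z - x) w)"]) (rule hg)
next
  case False
  then have xk: "x \<in> ker_mu B" unfolding H1_def by simp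
  have xv: "x + v \<in> H1 B" by (rule H1_shift[OF assms(1) xk assms(3)])
  define h1 where "h1 = (\<lambda>w. (1/2) * (delta (x + v) w - delta (z - (x + v)) w))"
  define h2 where "h2 = (\<lambda>w. (1/2) * (delta v w - delta (z - v) w))"
  have A: "goodh B z h1" "(\<lambda>w. h1 w - delta (x + v) w) \<in> qspan (tensor_rel z)"
    using hy_good[OF assms(1,2) xv] unfolding h1_def by auto
  have C: "goodh B z h2" "(\<lambda>w. h2 w - delta v w) \<in> qspan (tensor_rel z)"
    using hy_good[OF assms(1,2,3)] unfolding h2_def by auto
  have g: "goodh B z (\<lambda>w. h1 w + (-1) * h2 w)" by (rule goodh_add[OF A(1) C(1)])
  have "(\<lambda>w. (h1 w - delta (x + v) w) + ((-1) * (h2 w - delta v w) + (delta (x + v) w - delta x w - delta v w)))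
        \<in> qspan (tensor_rel z)"
    by (rule qspan_add[OF A(2) qspan_add[OF qspan_scale[OF C(2)] rel1]])
  then have "(\<lambda>w. (h1 w + (-1) * h2 w) - delta x w) \<in> qspan (tensor_rel z)"
    by (rule qspan_eq) (auto simp: algebra_simps)
  note r = this
  show ?thesis by (rule exI[of _ "\<lambda>w. h1 w + (-1) * h2 w"], intro conjI g r)
qed

lemma approx:
  assumes "alt_bilinear B" "z \<in> ker_mu B" "v \<in> H1 B" "finite S"
  shows "\<forall>g. {x. g x \<noteq> 0} \<subseteq> S \<longrightarrow> (\<exists>h. goodh B z h \<and> (\<lambda>w. h w - g w) \<in> qspan (tensor_rel z))"
  using assms(4)
proof (induction S rule: finite_induct)
  case empty
  show ?case
  proof (intro allI impI)
    fix g :: "'a \<Rightarrow> rat" assume "{x. g x \<noteq> 0} \<subseteq> {}"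
    then have e: "(\<lambda>w. 0 - g w) = (\<lambda>w. 0)" by auto
    show "\<exists>h. goodh B z h \<and> (\<lambda>w. h w - g w) \<in> qspan (tensor_rel z)"
      by (rule exI[of _ "\<lambda>w. 0"], intro conjI goodh_zero, simp only: e qspan_zero)
  qed
next
  case (insert x S)
  show ?case
  proof (intro allI impI)
    fix g :: "'a \<Rightarrow> rat" assume gs: "{x. g x \<noteq> 0} \<subseteq> insert x S"
    define g' where "g' = (\<lambda>w. g w - g x * delta x w)"
    have "{x. g' x \<noteq> 0} \<subseteq> S" using gs unfolding g'_def delta_def by auto
    then obtain h' where h': "goodh B z h'" "(\<lambda>w. h' w - g' w) \<in> qspan (tensor_rel z)"
      using insert.IH by blast
    obtain hx where hx: "goodh B z hx" "(\<lambda>w. hx w - delta x w) \<in> qspan (tensor_rel z)"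
      using delta_good[OF assms(1,2,3)] by blast
    have g: "goodh B z (\<lambda>w. h' w + g x * hx w)" by (rule goodh_add[OF h'(1) hx(1)])
    have "(\<lambda>w. (h' w - g' w) + g x * (hx w - delta x w)) \<in> qspan (tensor_rel z)"
      by (rule qspan_add[OF h'(2) qspan_scale[OF hx(2)]])
    then have "(\<lambda>w. (h' w + g x * hx w) - g w) \<in> qspan (tensor_rel z)"
      by (rule qspan_eq) (auto simp: g'_def algebra_simps)
    note r = this
    show "\<exists>h. goodh B z h \<and> (\<lambda>w. h w - g w) \<in> qspan (tensor_rel z)"
      by (rule exI[of _ "\<lambda>w. h' w + g x * hx w"], intro conjI g r)
  qed
qed

lemma sum_to_diff:
  fixes a b z :: "'a::ab_group_add"
  assumes "a + b = z" shows "b = z - a" "a = z - b"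
  using assms by (metis add_diff_cancel_left', metis add_diff_cancel_right')

lemma realize:
  assumes "alt_bilinear B" "z \<in> ker_mu B" "goodh B z h"
  shows "\<exists>c \<in> Z2w B (H1 B) z. tensor_map c = h"
proof -
  define c where "c = (\<lambda>p::'a\<times>'a. if fst p + snd p = z then 2 * h (fst p) else 0)"
  have hs: "fin_supp h" "\<And>y. h y \<noteq> 0 \<Longrightarrow> y \<in> H1 B" "\<And>y. h (z - y) = - h y"
    using assms(3) unfolding goodh_def by auto
  have sub: "{p. c p \<noteq> 0} \<subseteq> (\<lambda>a. (a, z - a)) ` {a. h a \<noteq> 0}"
  proof
    fix p assume "p \<in> {p. c p \<noteq> 0}"
    then have "fst p + snd p = z" "h (fst p) \<noteq> 0" unfolding c_def by (auto split: if_splits)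
    then show "p \<in> (\<lambda>a. (a, z - a)) ` {a. h a \<noteq> 0}"
      using sum_to_diff(1)[of "fst p" "snd p" z] by (intro image_eqI[of _ _ "fst p"]) (auto simp: prod_eq_iff)
  qed
  have fs: "fin_supp c" unfolding fin_supp_def
    using sub hs(1) unfolding fin_supp_def by (meson finite_imageI finite_subset)
  have anti: "\<forall>x y. c (x, y) = - c (y, x)"
  proof (intro allI)
    fix x y
    show "c (x, y) = - c (y, x)"
    proof (cases "x + y = z")
      case True
      have yx: "y + x = z" using True by (simp add: add.commute)
      have "y = z - x" using sum_to_diff(1)[OF True] .
      then show ?thesis unfolding c_def using True yx hs(3)[of x] by simp
    next
      case False
      have "y + x \<noteq> z" using False by (metis add.commute)
      then show ?thesis unfolding c_def using False by simp
    qed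
  qed
  have supp: "\<forall>p. c p \<noteq> 0 \<longrightarrow> fst p \<in> H1 B \<and> snd p \<in> H1 B \<and> fst p + snd p = z"
  proof (intro allI impI)
    fix p assume "c p \<noteq> 0"
    then have e: "fst p + snd p = z" "h (fst p) \<noteq> 0" unfolding c_def by (auto split: if_splits)
    have "snd p = z - fst p" using e(1) by (rule sum_to_diff(1))
    then have "h (snd p) \<noteq> 0" using hs(3)[of "fst p"] e by simp
    then show "fst p \<in> H1 B \<and> snd p \<in> H1 B \<and> fst p + snd p = z" using e hs(2) by blast
  qed
  have cyc: "ce_d2 B c = (\<lambda>_. 0)"
  proof
    fix w
    have "(\<Sum>p\<in>{p. c p \<noteq> 0 \<and> fst p + snd p = w}. c p * of_int (B (fst p) (snd p))) = 0"
    proof (rule sum.neutral, rule ballI)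
      fix p assume "p \<in> {p. c p \<noteq> 0 \<and> fst p + snd p = w}"
      then have "fst p + snd p = z" using supp by blast
      then have "snd p = z - fst p" by (rule sum_to_diff(1))
      then show "c p * of_int (B (fst p) (snd p)) = 0" using B_pair_zero[OF assms(1,2)] by simp
    qed
    then show "ce_d2 B c w = 0" unfolding ce_d2_def by simp
  qed
  have tm: "tensor_map c = h"
  proof
    fix u
    show "tensor_map c u = h u"
    proof (cases "h u = 0")
      case True
      have "{p. c p \<noteq> 0 \<and> fst p = u} = {}"
      proof (rule equals0I)
        fix p assume "p \<in> {p. c p \<noteq> 0 \<and> fst p = u}"
        then have "c p \<noteq> 0" "fst p = u" by auto
        then show False using True unfolding c_def by (auto split: if_splits)
      qed
      then have "tensor_map c u = (1/2) * sum c {}" unfolding tensor_map_def by (simp only:)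
      then show ?thesis using True by simp
    next
      case False
      have "{p. c p \<noteq> 0 \<and> fst p = u} = {(u, z - u)}"
      proof (rule set_eqI)
        fix p
        show "p \<in> {p. c p \<noteq> 0 \<and> fst p = u} \<longleftrightarrow> p \<in> {(u, z - u)}"
        proof
          assume "p \<in> {p. c p \<noteq> 0 \<and> fst p = u}"
          then have "fst p + snd p = z" "fst p = u" unfolding c_def by (auto split: if_splits)
          then have "snd p = z - u" "fst p = u" using sum_to_diff(1)[of "fst p" "snd p" z] by simp_all
          then show "p \<in> {(u, z - u)}" by (simp add: prod_eq_iff)
        next
          assume "p \<in> {(u, z - u)}"
          then have "p = (u, z - u)" by simp
          then show "p \<in> {p. c p \<noteq> 0 \<and> fst p = u}" using False unfolding c_def by simp
        qed
      qed
      then have "tensor_map c u = (1/2) * sum c {(u, z - u)}" unfolding tensor_map_def by (simp only:)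
      moreover have "c (u, z - u) = 2 * h u" unfolding c_def by simp
      ultimately show ?thesis by simp
    qed
  qed
  have "c \<in> Z2w B (H1 B) z"
    unfolding Z2w_def C2w_def mem_Collect_eq by (intro conjI fs anti supp cyc)
  note cm = this
  show ?thesis by (rule bexI[where P="\<lambda>c. tensor_map c = h", OF tm cm])
qed

theorem proposition3p4:
  fixes B :: "'a::ab_group_add \<Rightarrow> 'a \<Rightarrow> int" and z :: 'a
  assumes "alt_bilinear B"
    and "\<exists>x y. B x y \<noteq> 0"
    and "z \<in> ker_mu B"
  shows "\<forall>g. fin_supp g \<longrightarrow>
           (\<exists>c \<in> Z2w B (H1 B) z. tensor_map c - g \<in> qspan (tensor_rel z))"
proof (intro allI impI)
  fix g :: "'a \<Rightarrow> rat" assume fg: "fin_supp g"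
  obtain v y where "B v y \<noteq> 0" using assms(2) by blast
  then have v: "v \<in> H1 B" unfolding H1_def ker_mu_def by auto
  obtain h where h: "goodh B z h" "(\<lambda>w. h w - g w) \<in> qspan (tensor_rel z)"
    using approx[OF assms(1,3) v, of "{x. g x \<noteq> 0}"] fg unfolding fin_supp_def by blast
  obtain c where c: "c \<in> Z2w B (H1 B) z" "tensor_map c = h" using realize[OF assms(1,3) h(1)] by blast
  have "tensor_map c - g = (\<lambda>w. h w - g w)" using c(2) by (simp add: fun_diff_def)
  then have r: "tensor_map c - g \<in> qspan (tensor_rel z)" using h(2) by simp
  show "\<exists>c \<in> Z2w B (H1 B) z. tensor_map c - g \<in> qspan (tensor_rel z)" by (rule bexI[where P="\<lambda>c. tensor_map c - g \<in> qspan (tensor_rel z)", OF r c(1)])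
qed

end
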